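(* There is an absolute constant $c>0$ such that for all $k\ge 2$, $\gamma\in(0,1/4]$ and $\varepsilon\in(0,1]$: if each of $n$ users reports its sample via $\varepsilon$-Hadamard Response and the curator applies any (possibly randomized) decision rule to the $n$ reports so that the whole procedure outputs ``uniform'' with probability at least $2/3$ when $p=u$ and ``not uniform'' with probability at least $2/3$ whenever $d_{TV}(p,u)>\gamma$, then $n\ge c\,k^{3/2}/(\gamma^2\varepsilon^2)$.
   Context: Users hold i.i.d. samples from an unknown $p\in\Delta([k])$; $u$ is the uniform distribution on $[k]$; $d_{TV}(p,q)=\frac12\|p-q\|_1$. Hadamard Response (HR): let $K=2^{\lceil\log_2(k+1)\rceil}$ and let $H_K\in\{-1,1\}^{K\times K}$ be the Sylvester Hadamard matrix ($H_1=[1]$, $H_{2m}=\begin{bmatrix}H_m&H_m\\H_m&-H_m\end{bmatrix}$). Fix an injection $\phi:[k]\to\{2,\dots,K\}$ and set $C_x=\{z\in[K]:(H_K)_{\phi(x),z}=1\}$. On input $x\in[k]$, HR outputs $z\in[K]$ with probability $\frac{2}{K}\cdot\frac{e^\varepsilon}{e^\varepsilon+1}$ if $z\in C_x$ and $\frac{2}{K}\cdot\frac{1}{e^\varepsilon+1}$ otherwise, independently across users. *)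

theory Defs
  imports Complex_Main "HOL-Library.FuncSet"
begin

text \<open>Sylvester Hadamard matrix of size 2^m, with 1-based indices i, j in {1..2^m}:
  H_1 = [1], H_{2h} = [[H_h, H_h],[H_h, -H_h]].\<close>
fun sylvester :: "nat \<Rightarrow> nat \<Rightarrow> nat \<Rightarrow> int" where
  "sylvester 0 i j = 1"
| "sylvester (Suc m) i j =
     (if i \<le> 2^m then
        (if j \<le> 2^m then sylvester m i j else sylvester m i (j - 2^m))
      else
        (if j \<le> 2^m then sylvester m (i - 2^m) j else - sylvester m (i - 2^m) (j - 2^m)))"

definition hr_logK :: "nat \<Rightarrow> nat" where
  "hr_logK k = nat \<lceil>log 2 (real k + 1)\<rceil>"

definition hr_K :: "nat \<Rightarrow> nat" where
  "hr_K k = 2 ^ hr_logK k"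

definition hr_C :: "nat \<Rightarrow> (nat \<Rightarrow> nat) \<Rightarrow> nat \<Rightarrow> nat set" where
  "hr_C k \<phi> x = {z \<in> {1..hr_K k}. sylvester (hr_logK k) (\<phi> x) z = 1}"

text \<open>Probability that Hadamard Response outputs z on input x.\<close>
definition hr_Q :: "nat \<Rightarrow> real \<Rightarrow> (nat \<Rightarrow> nat) \<Rightarrow> nat \<Rightarrow> nat \<Rightarrow> real" where
  "hr_Q k \<epsilon> \<phi> x z =
     (2 / real (hr_K k)) *
     (if z \<in> hr_C k \<phi> x then exp \<epsilon> / (exp \<epsilon> + 1) else 1 / (exp \<epsilon> + 1))"

definition hr_out :: "nat \<Rightarrow> real \<Rightarrow> (nat \<Rightarrow> nat) \<Rightarrow> (nat \<Rightarrow> real) \<Rightarrow> nat \<Rightarrow> real" where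
  "hr_out k \<epsilon> \<phi> p z = (\<Sum>x\<in>{1..k}. p x * hr_Q k \<epsilon> \<phi> x z)"

text \<open>p is a probability distribution on [k] = {1..k} (values outside [k] are irrelevant).\<close>
definition is_dist :: "nat \<Rightarrow> (nat \<Rightarrow> real) \<Rightarrow> bool" where
  "is_dist k p \<longleftrightarrow> (\<forall>x\<in>{1..k}. 0 \<le> p x) \<and> (\<Sum>x\<in>{1..k}. p x) = 1"

definition unif :: "nat \<Rightarrow> nat \<Rightarrow> real" where
  "unif k = (\<lambda>_. 1 / real k)"

definition dtv :: "nat \<Rightarrow> (nat \<Rightarrow> real) \<Rightarrow> (nat \<Rightarrow> real) \<Rightarrow> real" where
  "dtv k p q = (1/2) * (\<Sum>x\<in>{1..k}. \<bar>p x - q x\<bar>)"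

text \<open>A randomized decision rule is given by delta(zs) in [0,1], the probability of
  answering "not uniform" on the reports zs (zs i = report of user i, i < n).
  The reports are i.i.d. with distribution hr_out p; this is the probability
  that the whole procedure answers "not uniform".\<close>
definition reject_prob ::
  "nat \<Rightarrow> real \<Rightarrow> (nat \<Rightarrow> nat) \<Rightarrow> nat \<Rightarrow> ((nat \<Rightarrow> nat) \<Rightarrow> real) \<Rightarrow> (nat \<Rightarrow> real) \<Rightarrow> real" where
  "reject_prob k \<epsilon> \<phi> n \<delta> p =
     (\<Sum>zs\<in>PiE {..<n} (\<lambda>_. {1..hr_K k}). (\<Prod>i<n. hr_out k \<epsilon> \<phi> p (zs i)) * \<delta> zs)"

end

theory Submission
  imports Defs "HOL-Probability.Hoeffding"
begin


lemma syl_pm: "sylvester m i j = 1 \<or> sylvester m i j = -1"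
  by (induction m arbitrary: i j) auto

lemma syl_row1: "sylvester m 1 j = 1"
  by (induction m arbitrary: j) auto

lemma sum_split_pow:
  fixes f :: "nat \<Rightarrow> real"
  shows "(\<Sum>z\<in>{1..2^Suc m}. f z) = (\<Sum>z\<in>{1..2^m}. f z) + (\<Sum>z\<in>{1..2^m}. f (z + 2^m))"
proof -
  have "{1..2^Suc m} = {1..(2::nat)^m} \<union> {2^m+1..2^m+2^m}" by auto
  moreover have "(\<Sum>z\<in>{2^m+1..2^m+2^m}. f z) = (\<Sum>z\<in>{1..2^m}. f (z + 2^m))"
  proof -
    show ?thesis using sum.shift_bounds_cl_nat_ivl[of f 1 "2^m" "2^m"] by (simp add: add.commute)
  qed
  ultimately show ?thesis by (simp add: sum.union_disjoint)
qed

lemma syl_orth: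
  "a \<in> {1..2^m} \<Longrightarrow> b \<in> {1..2^m} \<Longrightarrow>
   (\<Sum>z\<in>{1..2^m}. real_of_int (sylvester m a z) * real_of_int (sylvester m b z)) = (if a = b then 2^m else 0)"
proof (induction m arbitrary: a b)
  case 0
  then show ?case by auto
next
  case (Suc m)
  let ?N = "(2::nat)^m"
  have sh: "\<And>z. z \<in> {1..?N} \<Longrightarrow> \<not> (z + ?N \<le> ?N) \<and> z \<le> ?N \<and> z + ?N - ?N = z" by auto
  define S where "S = (\<lambda>a b. (\<Sum>z\<in>{1..?N}. real_of_int (sylvester m a z) * real_of_int (sylvester m b z)))"
  have e: "(\<Sum>z\<in>{1..2^Suc m}. real_of_int (sylvester (Suc m) a z) * real_of_int (sylvester (Suc m) b z))
     = (if a \<le> ?N then (if b \<le> ?N then 2 * S a b else S a (b - ?N) - S a (b - ?N))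
        else (if b \<le> ?N then S (a - ?N) b - S (a - ?N) b else 2 * S (a - ?N) (b - ?N)))"
  proof -
    have h2: "(\<Sum>z\<in>{1..?N}. real_of_int (sylvester (Suc m) a (z + ?N)) * real_of_int (sylvester (Suc m) b (z + ?N)))
      = (if a \<le> ?N then (if b \<le> ?N then S a b else - S a (b - ?N))
        else (if b \<le> ?N then - S (a - ?N) b else S (a - ?N) (b - ?N)))"
      unfolding S_def by (auto simp: sum_negf intro!: sum.cong)
    have h1: "(\<Sum>z\<in>{1..?N}. real_of_int (sylvester (Suc m) a z) * real_of_int (sylvester (Suc m) b z))
      = (if a \<le> ?N then (if b \<le> ?N then S a b else S a (b - ?N))
        else (if b \<le> ?N then S (a - ?N) b else S (a - ?N) (b - ?N)))"
      unfolding S_def by (auto intro!: sum.cong)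
    show ?thesis by (subst sum_split_pow) (simp only: h1 h2, auto)
  qed
  have IH: "\<And>a b. a \<in> {1..?N} \<Longrightarrow> b \<in> {1..?N} \<Longrightarrow> S a b = (if a = b then 2^m else 0)"
    unfolding S_def by (rule Suc.IH)
  show ?case unfolding e using Suc.prems
    by (auto simp: IH) (subst IH; auto)+
qed



lemma cosh_bound_nonneg:
  fixes x :: real assumes "x \<ge> 0"
  shows "(exp x + exp (-x)) / 2 \<le> exp (x^2/2)"
proof -
  have "- (2*x) * (1/2) + ln (1 + (1/2) * (exp (2*x) - 1)) \<le> (2*x)^2/8"
    using Hoeffdings_lemma_aux[of "2*x" "1/2"] assms by simp
  hence "ln ((1 + exp (2*x))/2) \<le> x + x^2/2"
    by (simp add: field_simps power2_eq_square)
  hence "(1 + exp (2*x))/2 \<le> exp (x + x^2/2)"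
    by (metis add_pos_pos divide_pos_pos exp_gt_zero exp_le_cancel_iff exp_ln zero_less_one zero_less_numeral)
  also have "\<dots> = exp x * exp (x^2/2)" by (simp add: exp_add)
  finally have "(1 + exp (2*x))/2 \<le> exp x * exp (x^2/2)" .
  moreover have "exp (2*x) = exp x * exp x" by (simp add: exp_add[symmetric])
  ultimately have "(exp (-x) * (1 + exp x * exp x))/2 \<le> exp (-x) * (exp x * exp (x^2/2))"
    by (simp add: mult_left_mono divide_right_mono)
  moreover have "exp (-x) * exp x = 1" by (simp add: exp_minus)
  have "exp x * (2 * (exp (- x) * exp (x^2/2))) = 2 * exp(x^2/2)" by (simp add: exp_minus)
  ultimately show ?thesis by (simp add: algebra_simps)
qed

lemma cosh_bound:
  fixes x :: real
  shows "(exp x + exp (-x)) / 2 \<le> exp (x^2/2)"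
proof (cases "x \<ge> 0")
  case True then show ?thesis by (rule cosh_bound_nonneg)
next
  case False
  then have "(exp (-x) + exp (-(-x))) / 2 \<le> exp ((-x)^2/2)" by (intro cosh_bound_nonneg) auto
  then show ?thesis by (simp add: add.commute)
qed

lemma rademacher_mgf:
  fixes a :: "nat \<Rightarrow> real"
  shows "(\<Sum>\<theta>\<in>PiE {..<m} (\<lambda>_. {-1,1::real}). exp (\<Sum>j<m. \<theta> j * a j))
         \<le> 2^m * exp ((\<Sum>j<m. (a j)^2)/2)"
proof -
  have "(\<Sum>\<theta>\<in>PiE {..<m} (\<lambda>_. {-1,1::real}). exp (\<Sum>j<m. \<theta> j * a j))
      = (\<Sum>\<theta>\<in>PiE {..<m} (\<lambda>_. {-1,1::real}). \<Prod>j<m. exp (\<theta> j * a j))"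
    by (simp add: exp_sum)
  also have "\<dots> = (\<Prod>j<m. \<Sum>t\<in>{-1,1::real}. exp (t * a j))"
    by (rule prod_sum_PiE[symmetric]) auto
  also have "\<dots> = (\<Prod>j<m. 2 * ((exp (a j) + exp (- a j))/2))"
    by (auto intro!: prod.cong)
  also have "\<dots> \<le> (\<Prod>j<m. 2 * exp ((a j)^2/2))"
    by (intro prod_mono conjI mult_left_mono cosh_bound) (auto intro: add_nonneg_nonneg)
  also have "\<dots> = 2^m * exp ((\<Sum>j<m. (a j)^2)/2)"
    by (simp add: prod.distrib exp_sum sum_divide_distrib)
  finally show ?thesis .
qed

lemma parseval:
  fixes v :: "nat \<Rightarrow> nat \<Rightarrow> real" and c :: "nat \<Rightarrow> real"
  assumes orth: "\<And>i j. i < m \<Longrightarrow> j < m \<Longrightarrow> (\<Sum>z\<in>Z. v i z * v j z) = (if i = j then N else 0)"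
  shows "(\<Sum>z\<in>Z. (\<Sum>j<m. c j * v j z)^2) = N * (\<Sum>j<m. (c j)^2)"
proof -
  have "(\<Sum>z\<in>Z. (\<Sum>j<m. c j * v j z)^2) = (\<Sum>z\<in>Z. \<Sum>i<m. \<Sum>j<m. c i * c j * (v i z * v j z))"
    unfolding power2_eq_square sum_product by (simp add: algebra_simps)
  also have "\<dots> = (\<Sum>i<m. \<Sum>j<m. c i * c j * (\<Sum>z\<in>Z. v i z * v j z))"
    by (simp add: sum_distrib_left sum.swap[of _ Z])
  also have "\<dots> = (\<Sum>i<m. c i * c i * N)"
  proof (intro sum.cong refl)
    fix i assume i: "i \<in> {..<m}"
    have "(\<Sum>j<m. c i * c j * (\<Sum>z\<in>Z. v i z * v j z)) = (\<Sum>j<m. if i = j then c i * c j * N else 0)"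
      using i by (intro sum.cong refl) (simp add: orth)
    also have "\<dots> = c i * c i * N" using i by (simp add: sum.delta)
    finally show "(\<Sum>j<m. c i * c j * (\<Sum>z\<in>Z. v i z * v j z)) = c i * c i * N" .
  qed
  finally show ?thesis by (simp add: power2_eq_square sum_distrib_left algebra_simps)
qed

lemma bessel:
  fixes v :: "nat \<Rightarrow> nat \<Rightarrow> real" and u :: "nat \<Rightarrow> real"
  assumes fin: "finite Z" and N: "N > 0"
    and orth: "\<And>i j. i < m \<Longrightarrow> j < m \<Longrightarrow> (\<Sum>z\<in>Z. v i z * v j z) = (if i = j then N else 0)"
  shows "(\<Sum>j<m. (\<Sum>z\<in>Z. u z * v j z)^2) \<le> N * (\<Sum>z\<in>Z. (u z)^2)"
proof -
  define c where "c j = (\<Sum>z\<in>Z. u z * v j z)" for j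
  define w where "w z = (\<Sum>j<m. c j * v j z)" for z
  have ww: "(\<Sum>z\<in>Z. (w z)^2) = N * (\<Sum>j<m. (c j)^2)"
  proof -
    have "(\<Sum>z\<in>Z. (w z)^2) = (\<Sum>z\<in>Z. \<Sum>i<m. \<Sum>j<m. c i * c j * (v i z * v j z))"
      unfolding w_def power2_eq_square sum_product by (simp add: algebra_simps)
    also have "\<dots> = (\<Sum>i<m. \<Sum>j<m. c i * c j * (\<Sum>z\<in>Z. v i z * v j z))"
      by (simp add: sum_distrib_left sum.swap[of _ Z])
    also have "\<dots> = (\<Sum>i<m. c i * c i * N)"
    proof (intro sum.cong refl)
      fix i assume i: "i \<in> {..<m}"
      have "(\<Sum>j<m. c i * c j * (\<Sum>z\<in>Z. v i z * v j z)) = (\<Sum>j<m. if i = j then c i * c j * N else 0)"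
        using i by (intro sum.cong refl) (simp add: orth)
      also have "\<dots> = c i * c i * N" using i by (simp add: sum.delta)
      finally show "(\<Sum>j<m. c i * c j * (\<Sum>z\<in>Z. v i z * v j z)) = c i * c i * N" .
    qed
    finally show ?thesis by (simp add: power2_eq_square sum_distrib_left algebra_simps)
  qed
  have uw: "(\<Sum>z\<in>Z. u z * w z) = (\<Sum>j<m. (c j)^2)"
  proof -
    have "(\<Sum>z\<in>Z. u z * w z) = (\<Sum>z\<in>Z. \<Sum>j<m. c j * (u z * v j z))"
      unfolding w_def by (simp add: sum_distrib_left mult.left_commute)
    also have "\<dots> = (\<Sum>j<m. c j * (\<Sum>z\<in>Z. u z * v j z))"
      by (subst sum.swap) (simp add: sum_distrib_left)
    finally show ?thesis by (simp add: c_def power2_eq_square)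
  qed
  have "0 \<le> (\<Sum>z\<in>Z. (u z - w z / N)^2)" by (simp add: sum_nonneg)
  also have "\<dots> = (\<Sum>z\<in>Z. (u z)^2) - 2 / N * (\<Sum>z\<in>Z. u z * w z) + (\<Sum>z\<in>Z. (w z)^2) / N^2"
  proof -
    have "\<And>z. (u z - w z / N)^2 = (u z)^2 - 2 / N * (u z * w z) + (w z)^2 / N^2"
      using N by (simp add: power2_eq_square field_simps)
    then show ?thesis
      by (simp add: sum.distrib sum_subtractf sum_distrib_left sum_divide_distrib)
  qed
  also have "\<dots> = (\<Sum>z\<in>Z. (u z)^2) - (\<Sum>j<m. (c j)^2) / N"
    using N unfolding ww uw by (simp add: power2_eq_square field_simps)
  finally show ?thesis using N by (simp add: c_def field_simps)
qed



lemma test_lb: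
  fixes q :: "'t \<Rightarrow> nat \<Rightarrow> real" and q0 :: "nat \<Rightarrow> real" and Zs :: "nat set"
    and \<delta> :: "(nat \<Rightarrow> nat) \<Rightarrow> real"
  assumes finZ: "finite Zs" and finT: "finite T" and neT: "T \<noteq> {}"
    and q0pos: "\<And>z. z \<in> Zs \<Longrightarrow> q0 z > 0" and q0sum: "(\<Sum>z\<in>Zs. q0 z) = 1"
    and qsum: "\<And>\<theta>. \<theta> \<in> T \<Longrightarrow> (\<Sum>z\<in>Zs. q \<theta> z) = 1"
    and qnn: "\<And>\<theta> z. \<theta> \<in> T \<Longrightarrow> z \<in> Zs \<Longrightarrow> q \<theta> z \<ge> 0"
    and \<delta>01: "\<And>zs. 0 \<le> \<delta> zs \<and> \<delta> zs \<le> 1"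
    and H0: "(\<Sum>zs\<in>PiE {..<n} (\<lambda>_. Zs). (\<Prod>i<n. q0 (zs i)) * \<delta> zs) \<le> 1/3"
    and H1: "\<And>\<theta>. \<theta> \<in> T \<Longrightarrow> (\<Sum>zs\<in>PiE {..<n} (\<lambda>_. Zs). (\<Prod>i<n. q \<theta> (zs i)) * \<delta> zs) \<ge> 2/3"
  shows "(\<Sum>\<theta>\<in>T. \<Sum>\<theta>'\<in>T. (\<Sum>z\<in>Zs. q \<theta> z * q \<theta>' z / q0 z) ^ n) / (real (card T))^2 \<ge> 10/9"
proof -
  define Zn where "Zn = PiE {..<n} (\<lambda>_::nat. Zs)"
  define N where "N = real (card T)"
  have N: "N > 0" using finT neT by (simp add: N_def card_gt_0_iff)
  have finZn: "finite Zn" unfolding Zn_def using finZ by (simp add: finite_PiE)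
  define P0 where "P0 zs = (\<Prod>i<n. q0 (zs i))" for zs
  define P where "P \<theta> zs = (\<Prod>i<n. q \<theta> (zs i))" for \<theta> zs
  define M where "M zs = (\<Sum>\<theta>\<in>T. P \<theta> zs) / N" for zs
  have P0pos: "P0 zs > 0" if "zs \<in> Zn" for zs
    unfolding P0_def using that q0pos by (intro prod_pos) (auto simp: Zn_def PiE_iff)
  have sumP0: "(\<Sum>zs\<in>Zn. P0 zs) = 1"
    unfolding P0_def Zn_def using prod_sum_PiE[of "{..<n}" "\<lambda>_. Zs" "\<lambda>_ z. q0 z"] finZ
    by (simp add: q0sum)
  have sumP: "(\<Sum>zs\<in>Zn. P \<theta> zs) = 1" if "\<theta> \<in> T" for \<theta>
    unfolding P_def Zn_def using prod_sum_PiE[of "{..<n}" "\<lambda>_. Zs" "\<lambda>_ z. q \<theta> z"] finZ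
    by (simp add: qsum that)
  have sumM: "(\<Sum>zs\<in>Zn. M zs) = 1"
  proof -
    have "(\<Sum>zs\<in>Zn. \<Sum>\<theta>\<in>T. P \<theta> zs) = (\<Sum>\<theta>\<in>T. \<Sum>zs\<in>Zn. P \<theta> zs)" by (rule sum.swap)
    also have "\<dots> = N" using sumP by (simp add: N_def)
    finally show ?thesis unfolding M_def using N by (simp add: sum_divide_distrib[symmetric])
  qed
  have Md: "(\<Sum>zs\<in>Zn. M zs * \<delta> zs) \<ge> 2/3"
  proof -
    have "(\<Sum>zs\<in>Zn. M zs * \<delta> zs) = (\<Sum>\<theta>\<in>T. \<Sum>zs\<in>Zn. P \<theta> zs * \<delta> zs) / N"
      unfolding M_def by (simp add: sum_divide_distrib[symmetric] sum_distrib_right sum.swap[of _ Zn])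
    also have "\<dots> \<ge> (\<Sum>\<theta>\<in>T. 2/3) / N"
      using H1 N by (intro divide_right_mono sum_mono) (auto simp: P_def Zn_def)
    finally show ?thesis using N by (simp add: N_def)
  qed
  have key: "(M zs - P0 zs) * \<delta> zs \<le> 3 * (M zs - P0 zs)^2 / (2 * P0 zs) + P0 zs / 6"
    if "zs \<in> Zn" for zs
  proof -
    have p: "P0 zs > 0" using P0pos that .
    have "(M zs - P0 zs) * \<delta> zs \<le> \<bar>M zs - P0 zs\<bar>"
      using \<delta>01[of zs] by (cases "M zs - P0 zs \<ge> 0") (auto simp: mult_left_le mult_nonneg_nonpos2 intro: order_trans[of _ 0])
    also have "\<dots> \<le> 3 * (M zs - P0 zs)^2 / (2 * P0 zs) + P0 zs / 6"
    proof -
      have "0 \<le> (3 * \<bar>M zs - P0 zs\<bar> - P0 zs)^2" by simp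
      hence "6 * P0 zs * \<bar>M zs - P0 zs\<bar> \<le> 9 * \<bar>M zs - P0 zs\<bar>^2 + P0 zs^2"
        by (simp add: power2_eq_square algebra_simps)
      thus ?thesis using p by (simp add: field_simps power2_eq_square abs_mult_self_eq)
    qed
    finally show ?thesis .
  qed
  have "1/3 \<le> (\<Sum>zs\<in>Zn. (M zs - P0 zs) * \<delta> zs)"
    using Md H0 by (simp add: left_diff_distrib sum_subtractf P0_def Zn_def)
  also have "\<dots> \<le> (\<Sum>zs\<in>Zn. 3 * (M zs - P0 zs)^2 / (2 * P0 zs) + P0 zs / 6)"
    by (rule sum_mono) (rule key)
  also have "\<dots> = (3/2) * (\<Sum>zs\<in>Zn. (M zs - P0 zs)^2 / P0 zs) + 1/6"
    by (simp add: sum.distrib sum_divide_distrib[symmetric] sumP0 sum_distrib_left)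
  finally have chi: "(\<Sum>zs\<in>Zn. (M zs - P0 zs)^2 / P0 zs) \<ge> 1/9" by simp
  have "(\<Sum>zs\<in>Zn. (M zs - P0 zs)^2 / P0 zs) = (\<Sum>zs\<in>Zn. (M zs)^2 / P0 zs - 2 * M zs + P0 zs)"
    using P0pos by (intro sum.cong refl) (force simp: power2_eq_square field_simps)
  also have "\<dots> = (\<Sum>zs\<in>Zn. (M zs)^2 / P0 zs) - 1"
    by (simp add: sum.distrib sum_subtractf sumP0 sumM sum_distrib_left[symmetric])
  finally have chi2: "(\<Sum>zs\<in>Zn. (M zs)^2 / P0 zs) \<ge> 10/9" using chi by simp
  have "(\<Sum>zs\<in>Zn. (M zs)^2 / P0 zs) = (\<Sum>\<theta>\<in>T. \<Sum>\<theta>'\<in>T. \<Sum>zs\<in>Zn. P \<theta> zs * P \<theta>' zs / P0 zs) / N^2"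
  proof -
    have "(\<Sum>zs\<in>Zn. (M zs)^2 / P0 zs) = (\<Sum>zs\<in>Zn. (\<Sum>\<theta>\<in>T. \<Sum>\<theta>'\<in>T. P \<theta> zs * P \<theta>' zs / P0 zs) / N^2)"
      unfolding M_def power2_eq_square
      by (intro sum.cong refl) (simp add: sum_product sum_divide_distrib[symmetric] divide_divide_eq_left mult_ac)
    also have "\<dots> = (\<Sum>zs\<in>Zn. \<Sum>\<theta>\<in>T. \<Sum>\<theta>'\<in>T. P \<theta> zs * P \<theta>' zs / P0 zs) / N^2"
      by (simp add: sum_divide_distrib)
    also have "(\<Sum>zs\<in>Zn. \<Sum>\<theta>\<in>T. \<Sum>\<theta>'\<in>T. P \<theta> zs * P \<theta>' zs / P0 zs) = (\<Sum>\<theta>\<in>T. \<Sum>\<theta>'\<in>T. \<Sum>zs\<in>Zn. P \<theta> zs * P \<theta>' zs / P0 zs)"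
      by (simp add: sum.swap[of _ Zn])
    finally show ?thesis .
  qed
  also have "\<dots> = (\<Sum>\<theta>\<in>T. \<Sum>\<theta>'\<in>T. (\<Sum>z\<in>Zs. q \<theta> z * q \<theta>' z / q0 z) ^ n) / N^2"
  proof -
    have "(\<Sum>zs\<in>Zn. P \<theta> zs * P \<theta>' zs / P0 zs) = (\<Sum>z\<in>Zs. q \<theta> z * q \<theta>' z / q0 z) ^ n" for \<theta> \<theta>'
    proof -
      have "(\<Sum>zs\<in>Zn. P \<theta> zs * P \<theta>' zs / P0 zs) = (\<Sum>zs\<in>Zn. \<Prod>i<n. q \<theta> (zs i) * q \<theta>' (zs i) / q0 (zs i))"
        unfolding P_def P0_def by (simp add: prod.distrib prod_dividef)
      also have "\<dots> = (\<Prod>i<n. \<Sum>z\<in>Zs. q \<theta> z * q \<theta>' z / q0 z)"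
        unfolding Zn_def by (rule prod_sum_PiE[symmetric]) (use finZ in auto)
      finally show ?thesis by simp
    qed
    then show ?thesis by simp
  qed
  finally show ?thesis using chi2 by (simp add: N_def)
qed



lemma hrK_ge: "k + 1 \<le> hr_K k"
proof -
  have pos: "log 2 (real k + 1) \<ge> 0" by simp
  have "real k + 1 = 2 powr log 2 (real k + 1)" by simp
  also have "\<dots> \<le> 2 powr real_of_int \<lceil>log 2 (real k + 1)\<rceil>"
    by (intro powr_mono) auto
  also have "real_of_int \<lceil>log 2 (real k + 1)\<rceil> = real (hr_logK k)"
    using pos unfolding hr_logK_def by simp
  also have "(2::real) powr real (hr_logK k) = 2 ^ hr_logK k" by (simp add: powr_realpow)
  finally have "real k + 1 \<le> real (hr_K k)" unfolding hr_K_def by simp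
  then show ?thesis by linarith
qed

lemma Qform:
  assumes "z \<in> {1..hr_K k}"
  shows "hr_Q k \<epsilon> \<phi> x z = (1 + (exp \<epsilon> - 1)/(exp \<epsilon> + 1) * real_of_int (sylvester (hr_logK k) (\<phi> x) z)) / real (hr_K k)"
proof -
  have ep: "exp \<epsilon> + 1 > 0" by (simp add: add_pos_pos)
  have K: "real (hr_K k) > 0" by (simp add: hr_K_def)
  let ?t = "(exp \<epsilon> - 1)/(exp \<epsilon> + 1)"
  have a: "2 * (exp \<epsilon> / (exp \<epsilon> + 1)) = 1 + ?t * real_of_int 1"
    using ep by (simp add: field_simps)
  have b: "2 * (1 / (exp \<epsilon> + 1)) = 1 + ?t * real_of_int (-1)"
    using ep by (simp add: field_simps)
  consider (p) "sylvester (hr_logK k) (\<phi> x) z = 1" | (n) "sylvester (hr_logK k) (\<phi> x) z = -1"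
    using syl_pm by blast
  then show ?thesis
  proof cases
    case p
    then have "hr_Q k \<epsilon> \<phi> x z = 2 * (exp \<epsilon> / (exp \<epsilon> + 1)) / real (hr_K k)"
      using assms by (simp add: hr_Q_def hr_C_def)
    then show ?thesis using p by (simp only: a)
  next
    case n
    then have "hr_Q k \<epsilon> \<phi> x z = 2 * (1 / (exp \<epsilon> + 1)) / real (hr_K k)"
      using assms by (simp add: hr_Q_def hr_C_def)
    then show ?thesis using n by (simp only: b)
  qed
qed

lemma Qnn: "hr_Q k \<epsilon> \<phi> x z \<ge> 0"
  by (simp add: hr_Q_def add_pos_pos)

lemma sdot:
  fixes \<theta> f :: "nat \<Rightarrow> real"
  assumes "2*m \<le> k"
  shows "(\<Sum>x\<in>{1..k}. (\<Sum>i<m. \<theta> i * (of_bool (x = 2*i+1) - of_bool (x = 2*i+2))) * f x)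
       = (\<Sum>i<m. \<theta> i * (f (2*i+1) - f (2*i+2)))"
proof -
  have "(\<Sum>x\<in>{1..k}. (\<Sum>i<m. \<theta> i * (of_bool (x = 2*i+1) - of_bool (x = 2*i+2))) * f x)
     = (\<Sum>i<m. \<theta> i * ((\<Sum>x\<in>{1..k}. of_bool (x = 2*i+1) * f x) - (\<Sum>x\<in>{1..k}. of_bool (x = 2*i+2) * f x)))"
  proof -
    have "(\<Sum>x\<in>{1..k}. (\<Sum>i<m. \<theta> i * (of_bool (x = 2*i+1) - of_bool (x = 2*i+2))) * f x)
        = (\<Sum>x\<in>{1..k}. \<Sum>i<m. \<theta> i * (of_bool (x = 2*i+1) - of_bool (x = 2*i+2)) * f x)"
      by (simp add: sum_distrib_right)
    also have "\<dots> = (\<Sum>i<m. \<Sum>x\<in>{1..k}. \<theta> i * (of_bool (x = 2*i+1) - of_bool (x = 2*i+2)) * f x)"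
      by (rule sum.swap)
    also have "\<dots> = (\<Sum>i<m. \<theta> i * ((\<Sum>x\<in>{1..k}. of_bool (x = 2*i+1) * f x) - (\<Sum>x\<in>{1..k}. of_bool (x = 2*i+2) * f x)))"
      by (simp only: sum_subtractf[symmetric] sum_distrib_left) (intro sum.cong refl, simp only: ring_distribs mult_ac)
    finally show ?thesis .
  qed
  also have "\<dots> = (\<Sum>i<m. \<theta> i * (f (2*i+1) - f (2*i+2)))"
  proof (intro sum.cong refl)
    fix i assume "i \<in> {..<m}"
    then have i: "2*i+2 \<le> k" using assms by auto
    have a: "(\<Sum>x\<in>{1..k}. of_bool (x = c) * f x) = f c" if "c \<in> {1..k}" for c
    proof -
      have "(\<Sum>x\<in>{1..k}. of_bool (x = c) * f x) = (\<Sum>x\<in>{1..k}. if x = c then f x else 0)"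
        by (intro sum.cong) auto
      also have "\<dots> = f c" using that by (simp add: sum.delta')
      finally show ?thesis .
    qed
    show "\<theta> i * ((\<Sum>x\<in>{1..k}. of_bool (x = 2*i+1) * f x) - (\<Sum>x\<in>{1..k}. of_bool (x = 2*i+2) * f x))
        = \<theta> i * (f (2*i+1) - f (2*i+2))"
      using i by (simp add: a)
  qed
  finally show ?thesis .
qed

lemma sval1:
  fixes \<theta> :: "nat \<Rightarrow> real"
  assumes "j < m"
  shows "(\<Sum>i<m. \<theta> i * (of_bool (2*j+1 = 2*i+1) - of_bool (2*j+1 = 2*i+2))) = \<theta> j"
proof -
  have "(\<Sum>i<m. \<theta> i * (of_bool (2*j+1 = 2*i+1) - of_bool (2*j+1 = 2*i+2))) = (\<Sum>i<m. if i = j then \<theta> i else 0)"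
  proof (intro sum.cong refl)
    fix i
    have "(2*j+1 = 2*i+1) = (i = j)" "\<not> (2*j+1 = 2*i+2)" by presburger+
    then show "\<theta> i * (of_bool (2*j+1 = 2*i+1) - of_bool (2*j+1 = 2*i+2)) = (if i = j then \<theta> i else 0)" by simp
  qed
  then show ?thesis using assms by (simp add: sum.delta')
qed

lemma sval2:
  fixes \<theta> :: "nat \<Rightarrow> real"
  assumes "j < m"
  shows "(\<Sum>i<m. \<theta> i * (of_bool (2*j+2 = 2*i+1) - of_bool (2*j+2 = 2*i+2))) = - \<theta> j"
proof -
  have "(\<Sum>i<m. \<theta> i * (of_bool (2*j+2 = 2*i+1) - of_bool (2*j+2 = 2*i+2))) = (\<Sum>i<m. if i = j then - \<theta> i else 0)"
  proof (intro sum.cong refl)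
    fix i
    have "(2*j+2 = 2*i+2) = (i = j)" "\<not> (2*j+2 = 2*i+1)" by presburger+
    then show "\<theta> i * (of_bool (2*j+2 = 2*i+1) - of_bool (2*j+2 = 2*i+2)) = (if i = j then - \<theta> i else 0)" by simp
  qed
  then show ?thesis using assms by (simp add: sum.delta')
qed

lemma sbound:
  fixes \<theta> :: "nat \<Rightarrow> real"
  assumes "\<And>i. i < m \<Longrightarrow> \<bar>\<theta> i\<bar> \<le> 1"
  shows "\<bar>\<Sum>i<m. \<theta> i * (of_bool (x = 2*i+1) - of_bool (x = 2*i+2))\<bar> \<le> 1"
proof (cases "odd x")
  case True
  then obtain j where j: "x = 2*j+1" by (metis oddE)
  show ?thesis
  proof (cases "j < m")
    case True then show ?thesis using sval1[OF True, of \<theta>] assms j by simp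
  next
    case False
    have "(\<Sum>i<m. \<theta> i * (of_bool (x = 2*i+1) - of_bool (x = 2*i+2))) = 0"
      using False j by (intro sum.neutral) auto
    then show ?thesis by simp
  qed
next
  case False
  show ?thesis
  proof (cases "x = 0")
    case True
    have "(\<Sum>i<m. \<theta> i * (of_bool (x = 2*i+1) - of_bool (x = 2*i+2))) = 0"
      using True by (intro sum.neutral) auto
    then show ?thesis by simp
  next
    case x0: False
    from False obtain y where y: "x = 2*y" by (auto elim: evenE)
    define j where "j = y - 1"
    have j: "x = 2*j+2" using y x0 unfolding j_def by auto
    show ?thesis
    proof (cases "j < m")
      case True then show ?thesis using sval2[OF True, of \<theta>] assms j by simp
    next
      case False
      have "(\<Sum>i<m. \<theta> i * (of_bool (x = 2*i+1) - of_bool (x = 2*i+2))) = 0"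
        using False j by (intro sum.neutral) auto
      then show ?thesis by simp
    qed
  qed
qed



theorem theorem5p3:
  shows "\<exists>c>0. \<forall>(k::nat) (\<gamma>::real) (\<epsilon>::real) (n::nat) (\<phi>::nat \<Rightarrow> nat) (\<delta>::(nat \<Rightarrow> nat) \<Rightarrow> real).
     k \<ge> 2 \<longrightarrow> 0 < \<gamma> \<longrightarrow> \<gamma> \<le> 1/4 \<longrightarrow> 0 < \<epsilon> \<longrightarrow> \<epsilon> \<le> 1 \<longrightarrow>
     inj_on \<phi> {1..k} \<longrightarrow> \<phi> ` {1..k} \<subseteq> {2..hr_K k} \<longrightarrow>
     (\<forall>zs. 0 \<le> \<delta> zs \<and> \<delta> zs \<le> 1) \<longrightarrow>
     reject_prob k \<epsilon> \<phi> n \<delta> (unif k) \<le> 1/3 \<longrightarrow>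
     (\<forall>p. is_dist k p \<and> dtv k p (unif k) > \<gamma> \<longrightarrow> reject_prob k \<epsilon> \<phi> n \<delta> p \<ge> 2/3) \<longrightarrow>
     real n \<ge> c * real k powr (3/2) / (\<gamma>^2 * \<epsilon>^2)"
proof (intro exI[of _ "1/144"] conjI allI impI)
  show "(0::real) < 1/144" by simp
next
  fix k :: nat and \<gamma> \<epsilon> :: real and n :: nat and \<phi> :: "nat \<Rightarrow> nat" and \<delta> :: "(nat \<Rightarrow> nat) \<Rightarrow> real"
  assume k2: "2 \<le> k" and g0: "0 < \<gamma>" and g1: "\<gamma> \<le> 1/4" and e0: "0 < \<epsilon>" and e1: "\<epsilon> \<le> 1"
    and inj: "inj_on \<phi> {1..k}" and rng: "\<phi> ` {1..k} \<subseteq> {2..hr_K k}"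
    and d01: "\<forall>zs. 0 \<le> \<delta> zs \<and> \<delta> zs \<le> 1"
    and H0: "reject_prob k \<epsilon> \<phi> n \<delta> (unif k) \<le> 1/3"
    and H1: "\<forall>p. is_dist k p \<and> dtv k p (unif k) > \<gamma> \<longrightarrow> reject_prob k \<epsilon> \<phi> n \<delta> p \<ge> 2/3"
  define L where "L = hr_logK k"
  define K where "K = hr_K k"
  have KL: "K = 2^L" by (simp add: K_def L_def hr_K_def)
  have Kk: "k + 1 \<le> K" using hrK_ge K_def by simp
  have Kpos: "real K > 0" using Kk by simp
  have kpos: "real k > 0" using k2 by simp
  define Zs where "Zs = {1..K}"
  have finZ: "finite Zs" and cardZ: "card Zs = K" by (simp_all add: Zs_def)
  define H where "H a z = real_of_int (sylvester L a z)" for a z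
  define E where "E = exp \<epsilon>"
  define t where "t = (E - 1)/(E + 1)"
  define m where "m = k div 2"
  define \<eta> where "\<eta> = 4*\<gamma>"
  define T where "T = PiE {..<m} (\<lambda>_. {-1,1::real})"
  define s where "s \<theta> x = (\<Sum>i<m. \<theta> i * (of_bool (x = 2*i+1) - of_bool (x = 2*i+2)))" for \<theta> :: "nat \<Rightarrow> real" and x
  define p\<theta> where "p\<theta> \<theta> x = 1/real k + \<eta>/real k * s \<theta> x" for \<theta> x
  define v where "v i z = H (\<phi> (2*i+1)) z - H (\<phi> (2*i+2)) z" for i z
  define D where "D \<theta> z = (\<Sum>i<m. \<theta> i * v i z)" for \<theta> :: "nat \<Rightarrow> real" and z
  define Qh where "Qh x z = (1 + t * H (\<phi> x) z) / real K" for x z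
  define q0 where "q0 z = (\<Sum>x\<in>{1..k}. 1/real k * Qh x z)" for z
  define g where "g = t*\<eta>/(real k * real K)"
  define q where "q \<theta> z = q0 z + g * D \<theta> z" for \<theta> z
  have m2: "2*m \<le> k" "k \<le> 2*m+1" "1 \<le> m" unfolding m_def using k2 by auto
  have E1: "1 < E" using e0 by (simp add: E_def)
  have E3: "E \<le> 3" unfolding E_def using exp_le e1 by (meson exp_le_cancel_iff order_trans)
  have t0: "0 \<le> t" "t < 1" using E1 by (auto simp: t_def)
  have t1: "1 - t \<ge> 1/2"
  proof -
    have "1 - t = 2/(E+1)" using E1 by (simp add: t_def field_simps)
    also have "\<dots> \<ge> 2/4" using E3 E1 by (intro divide_left_mono) auto
    finally show ?thesis by simp
  qed
  have te: "t \<le> \<epsilon>"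
  proof -
    have "E \<le> 1 + \<epsilon> + \<epsilon>^2" unfolding E_def using exp_bound[of \<epsilon>] e0 e1 by simp
    also have "\<dots> \<le> 1 + 2*\<epsilon>" using e0 e1 by (simp add: power2_eq_square mult_left_le)
    finally have "E - 1 \<le> 2 * \<epsilon>" by simp
    moreover have "0 \<le> \<epsilon> * (E - 1)" using e0 E1 by simp
    moreover have "\<epsilon> * (E + 1) = \<epsilon> * (E - 1) + 2 * \<epsilon>" by (simp add: algebra_simps)
    ultimately have "E - 1 \<le> \<epsilon> * (E + 1)" by linarith
    then show ?thesis unfolding t_def using E1 by (simp add: divide_le_eq)
  qed
  have phir: "\<phi> x \<in> {1..K}" "\<phi> x \<noteq> 1" if "x \<in> {1..k}" for x
  proof -
    from rng that have "\<phi> x \<in> {2..hr_K k}" by blast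
    then show "\<phi> x \<in> {1..K}" "\<phi> x \<noteq> 1" by (auto simp: K_def)
  qed
  have phieq: "\<phi> x = \<phi> y \<longleftrightarrow> x = y" if "x \<in> {1..k}" "y \<in> {1..k}" for x y
    using inj that by (auto simp: inj_on_eq_iff)
  have Hpm: "H a z = 1 \<or> H a z = -1" for a z
    using syl_pm[of L a z] by (auto simp: H_def)
  have Hrow1: "H 1 z = 1" for z using syl_row1[of L z] by (simp add: H_def)
  have orth: "(\<Sum>z\<in>Zs. H a z * H b z) = (if a = b then real K else 0)" if "a \<in> {1..K}" "b \<in> {1..K}" for a b
    using syl_orth[of a L b] that by (simp add: H_def Zs_def KL)
  have rowsum: "(\<Sum>z\<in>Zs. H (\<phi> x) z) = 0" if "x \<in> {1..k}" for x
  proof -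
    have "(\<Sum>z\<in>Zs. H (\<phi> x) z) = (\<Sum>z\<in>Zs. H 1 z * H (\<phi> x) z)" by (simp only: Hrow1 mult_1_left)
    also have "\<dots> = 0" using orth[of 1 "\<phi> x"] phir[OF that] Kk by simp
    finally show ?thesis .
  qed
  have vorth: "(\<Sum>z\<in>Zs. v i z * v j z) = (if i = j then 2 * real K else 0)" if "i < m" "j < m" for i j
  proof -
    have r: "2*i+1 \<in> {1..k}" "2*i+2 \<in> {1..k}" "2*j+1 \<in> {1..k}" "2*j+2 \<in> {1..k}" using that m2 by auto
    have "(\<Sum>z\<in>Zs. v i z * v j z) = (\<Sum>z\<in>Zs. H (\<phi> (2*i+1)) z * H (\<phi> (2*j+1)) z) - (\<Sum>z\<in>Zs. H (\<phi> (2*i+1)) z * H (\<phi> (2*j+2)) z)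
       - (\<Sum>z\<in>Zs. H (\<phi> (2*i+2)) z * H (\<phi> (2*j+1)) z) + (\<Sum>z\<in>Zs. H (\<phi> (2*i+2)) z * H (\<phi> (2*j+2)) z)"
      unfolding v_def by (simp add: sum.distrib sum_subtractf algebra_simps)
    also have "\<dots> = (if i = j then 2 * real K else 0)"
    proof -
      have o: "(\<Sum>z\<in>Zs. H (\<phi> x) z * H (\<phi> y) z) = (if x = y then real K else 0)" if "x\<in>{1..k}" "y\<in>{1..k}" for x y
        using orth[OF phir(1)[OF that(1)] phir(1)[OF that(2)]] phieq[OF that] by simp
      have p: "(2*i+1 = 2*j+1) = (i = j)" "(2*i+2 = 2*j+2) = (i = j)" "(2*i+1 \<noteq> 2*j+2)" "(2*i+2 \<noteq> 2*j+1)" by presburger+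
      show ?thesis by (simp only: o[OF r(1) r(3)] o[OF r(1) r(4)] o[OF r(2) r(3)] o[OF r(2) r(4)] p) auto
    qed
    finally show ?thesis .
  qed
  have vsum: "(\<Sum>z\<in>Zs. v i z) = 0" if "i < m" for i
    using that m2 unfolding v_def by (simp add: sum_subtractf rowsum)
  have Dsum: "(\<Sum>z\<in>Zs. D \<theta> z) = 0" for \<theta>
    unfolding D_def by (subst sum.swap) (simp add: sum_distrib_left[symmetric] vsum)
  have Qf: "hr_Q k \<epsilon> \<phi> x z = Qh x z" if "z \<in> Zs" for x z
    using Qform[of z k \<epsilon> \<phi> x] that by (simp add: Qh_def Zs_def K_def t_def E_def H_def L_def)
  have Qhsum: "(\<Sum>z\<in>Zs. Qh x z) = 1" if "x \<in> {1..k}" for x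
  proof -
    have "(\<Sum>z\<in>Zs. Qh x z) = (\<Sum>z\<in>Zs. 1 + t * H (\<phi> x) z) / real K"
      unfolding Qh_def by (simp add: sum_divide_distrib)
    also have "\<dots> = 1" using rowsum[OF that] cardZ Kpos by (simp add: sum.distrib sum_distrib_left[symmetric])
    finally show ?thesis .
  qed
  have outu: "hr_out k \<epsilon> \<phi> (unif k) z = q0 z" if "z \<in> Zs" for z
    unfolding hr_out_def q0_def unif_def using Qf[OF that] by simp
  have sQh: "(\<Sum>x\<in>{1..k}. s \<theta> x * Qh x z) = t / real K * D \<theta> z" for \<theta> z
  proof -
    have "(\<Sum>x\<in>{1..k}. s \<theta> x * Qh x z) = (\<Sum>i<m. \<theta> i * (Qh (2*i+1) z - Qh (2*i+2) z))"
      unfolding s_def by (rule sdot) (use m2 in auto)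
    also have "\<dots> = (\<Sum>i<m. t / real K * (\<theta> i * v i z))"
      using Kpos by (intro sum.cong refl) (simp add: Qh_def v_def field_simps)
    finally show ?thesis by (simp add: D_def sum_distrib_left)
  qed
  have outp: "hr_out k \<epsilon> \<phi> (p\<theta> \<theta>) z = q \<theta> z" if "z \<in> Zs" for \<theta> z
  proof -
    have "hr_out k \<epsilon> \<phi> (p\<theta> \<theta>) z = (\<Sum>x\<in>{1..k}. 1/real k * Qh x z + \<eta>/real k * (s \<theta> x * Qh x z))"
      unfolding hr_out_def using Qf[OF that] by (intro sum.cong refl) (simp add: p\<theta>_def algebra_simps)
    also have "\<dots> = (\<Sum>x\<in>{1..k}. 1/real k * Qh x z) + \<eta>/real k * (\<Sum>x\<in>{1..k}. s \<theta> x * Qh x z)"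
      by (simp only: sum.distrib sum_distrib_left)
    also have "\<dots> = q0 z + \<eta>/real k * (t / real K * D \<theta> z)"
      by (simp only: sQh q0_def)
    finally show ?thesis by (simp add: q_def g_def)
  qed
  have Tpm: "\<theta> i = 1 \<or> \<theta> i = -1" if "\<theta> \<in> T" "i < m" for \<theta> i
    using that by (auto simp: T_def PiE_iff)
  have Tabs: "\<bar>\<theta> i\<bar> \<le> 1" if "\<theta> \<in> T" "i < m" for \<theta> i
    using Tpm[OF that] by auto
  have finT: "finite T" and cardT: "card T = 2^m" and neT: "T \<noteq> {}"
    unfolding T_def by (auto simp: finite_PiE card_PiE PiE_eq_empty_iff numeral_2_eq_2)
  have sabs: "\<bar>s \<theta> x\<bar> \<le> 1" if "\<theta> \<in> T" for \<theta> x
    unfolding s_def by (rule sbound) (use Tabs that in auto)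
  have eta1: "\<eta> \<le> 1" "0 < \<eta>" using g0 g1 by (auto simp: \<eta>_def)
  have distp: "is_dist k (p\<theta> \<theta>)" if "\<theta> \<in> T" for \<theta>
  proof -
    have "0 \<le> p\<theta> \<theta> x" for x
    proof -
      have "\<eta> * \<bar>s \<theta> x\<bar> \<le> 1" using sabs[OF that, of x] eta1 by (simp add: mult_le_one)
      then have "0 \<le> 1 + \<eta> * s \<theta> x" by (smt (verit) abs_le_D2 mult_minus_right abs_mult eta1(2) abs_of_pos)
      then show ?thesis using kpos by (simp add: p\<theta>_def add_divide_distrib[symmetric] mult.commute)
    qed
    moreover have "(\<Sum>x\<in>{1..k}. s \<theta> x) = 0"
      using sdot[of m k \<theta> "\<lambda>_. 1"] m2 by (simp add: s_def)
    moreover have "(\<Sum>x\<in>{1..k}. p\<theta> \<theta> x) = (\<Sum>x\<in>{1..k}. 1/real k) + \<eta>/real k * (\<Sum>x\<in>{1..k}. s \<theta> x)"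
      by (simp add: p\<theta>_def sum.distrib sum_distrib_left)
    ultimately show ?thesis using kpos by (simp add: is_dist_def)
  qed
  have dtvp: "dtv k (p\<theta> \<theta>) (unif k) > \<gamma>" if "\<theta> \<in> T" for \<theta>
  proof -
    have "(\<Sum>x\<in>{1..k}. s \<theta> x * s \<theta> x) = (\<Sum>i<m. \<theta> i * (s \<theta> (2*i+1) - s \<theta> (2*i+2)))"
      unfolding s_def[of \<theta>] by (rule sdot) (use m2 in auto)
    also have "\<dots> = (\<Sum>i<m. 2)"
    proof (intro sum.cong refl)
      fix i assume i: "i \<in> {..<m}"
      have "s \<theta> (2*i+1) = \<theta> i" "s \<theta> (2*i+2) = - \<theta> i" unfolding s_def using i sval1 sval2 by auto
      then show "\<theta> i * (s \<theta> (2*i+1) - s \<theta> (2*i+2)) = 2" using Tpm[OF that, of i] i by auto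
    qed
    finally have ss: "(\<Sum>x\<in>{1..k}. s \<theta> x * s \<theta> x) = 2 * real m" by simp
    have "(\<Sum>x\<in>{1..k}. s \<theta> x * s \<theta> x) \<le> (\<Sum>x\<in>{1..k}. \<bar>s \<theta> x\<bar>)"
    proof (intro sum_mono)
      fix x
      have "s \<theta> x * s \<theta> x = \<bar>s \<theta> x\<bar> * \<bar>s \<theta> x\<bar>" by simp
      also have "\<dots> \<le> \<bar>s \<theta> x\<bar> * 1" using sabs[OF that, of x] by (intro mult_left_mono) auto
      finally show "s \<theta> x * s \<theta> x \<le> \<bar>s \<theta> x\<bar>" by simp
    qed
    then have sabs2: "2 * real m \<le> (\<Sum>x\<in>{1..k}. \<bar>s \<theta> x\<bar>)" using ss by simp
    have "dtv k (p\<theta> \<theta>) (unif k) = 1/2 * (\<eta> / real k * (\<Sum>x\<in>{1..k}. \<bar>s \<theta> x\<bar>))"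
      unfolding dtv_def p\<theta>_def unif_def using eta1 kpos
      by (simp add: abs_mult sum_distrib_left)
    also have "\<dots> \<ge> 1/2 * (\<eta> / real k * (2 * real m))"
      using sabs2 eta1 kpos by (intro mult_left_mono) auto
    finally have "dtv k (p\<theta> \<theta>) (unif k) \<ge> \<eta> * real m / real k" by simp
    moreover have "\<eta> * real m / real k > \<gamma>"
    proof -
      have "real k < 4 * real m" using m2 k2 by linarith
      then have "\<gamma> * real k < \<gamma> * (4 * real m)" using g0 by simp
      then show ?thesis using kpos by (simp add: \<eta>_def field_simps)
    qed
    ultimately show ?thesis by linarith
  qed
  have ZnI: "zs i \<in> Zs" if "zs \<in> PiE {..<n} (\<lambda>_. {1..hr_K k})" "i < n" for zs i
    using that by (auto simp: Zs_def K_def PiE_iff)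
  have ZnE: "PiE {..<n} (\<lambda>_. {1..hr_K k}) = PiE {..<n} (\<lambda>_. Zs)" by (simp add: Zs_def K_def)
  have rej0: "(\<Sum>zs\<in>PiE {..<n} (\<lambda>_. Zs). (\<Prod>i<n. q0 (zs i)) * \<delta> zs) \<le> 1/3"
  proof -
    have "reject_prob k \<epsilon> \<phi> n \<delta> (unif k) = (\<Sum>zs\<in>PiE {..<n} (\<lambda>_. Zs). (\<Prod>i<n. q0 (zs i)) * \<delta> zs)"
      unfolding reject_prob_def
    proof (rule sum.cong[OF ZnE])
      fix zs assume "zs \<in> PiE {..<n} (\<lambda>_. Zs)"
      then have "zs \<in> PiE {..<n} (\<lambda>_. {1..hr_K k})" using ZnE by simp
      then have "(\<Prod>i<n. hr_out k \<epsilon> \<phi> (unif k) (zs i)) = (\<Prod>i<n. q0 (zs i))"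
        by (intro prod.cong refl) (simp add: outu ZnI)
      then show "(\<Prod>i<n. hr_out k \<epsilon> \<phi> (unif k) (zs i)) * \<delta> zs = (\<Prod>i<n. q0 (zs i)) * \<delta> zs" by simp
    qed
    then show ?thesis using H0 by simp
  qed
  have rej1: "(\<Sum>zs\<in>PiE {..<n} (\<lambda>_. Zs). (\<Prod>i<n. q \<theta> (zs i)) * \<delta> zs) \<ge> 2/3" if "\<theta> \<in> T" for \<theta>
  proof -
    have "reject_prob k \<epsilon> \<phi> n \<delta> (p\<theta> \<theta>) = (\<Sum>zs\<in>PiE {..<n} (\<lambda>_. Zs). (\<Prod>i<n. q \<theta> (zs i)) * \<delta> zs)"
      unfolding reject_prob_def
    proof (rule sum.cong[OF ZnE])
      fix zs assume "zs \<in> PiE {..<n} (\<lambda>_. Zs)"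
      then have "zs \<in> PiE {..<n} (\<lambda>_. {1..hr_K k})" using ZnE by simp
      then have "(\<Prod>i<n. hr_out k \<epsilon> \<phi> (p\<theta> \<theta>) (zs i)) = (\<Prod>i<n. q \<theta> (zs i))"
        by (intro prod.cong refl) (simp add: outp ZnI)
      then show "(\<Prod>i<n. hr_out k \<epsilon> \<phi> (p\<theta> \<theta>) (zs i)) * \<delta> zs = (\<Prod>i<n. q \<theta> (zs i)) * \<delta> zs" by simp
    qed
    moreover have "reject_prob k \<epsilon> \<phi> n \<delta> (p\<theta> \<theta>) \<ge> 2/3"
      using H1 distp[OF that] dtvp[OF that] by blast
    ultimately show ?thesis by simp
  qed
  have q0lb: "q0 z \<ge> (1 - t) / real K" if "z \<in> Zs" for z
  proof -
    have "(\<Sum>x\<in>{1..k}. 1/real k * ((1 - t) / real K)) \<le> q0 z"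
      unfolding q0_def Qh_def
    proof (intro sum_mono mult_left_mono divide_right_mono)
      fix x show "1 - t \<le> 1 + t * H (\<phi> x) z" using Hpm[of "\<phi> x" z] t0 by auto
    qed auto
    then show ?thesis using kpos by simp
  qed
  have q0pos: "q0 z > 0" if "z \<in> Zs" for z
    using q0lb[OF that] t0 Kpos by (smt (verit) divide_pos_pos)
  have q0sum: "(\<Sum>z\<in>Zs. q0 z) = 1"
  proof -
    have "(\<Sum>z\<in>Zs. q0 z) = (\<Sum>x\<in>{1..k}. 1/real k * (\<Sum>z\<in>Zs. Qh x z))"
      unfolding q0_def by (subst sum.swap) (simp add: sum_distrib_left)
    also have "\<dots> = 1" using kpos by (simp add: Qhsum)
    finally show ?thesis .
  qed
  have qsum: "(\<Sum>z\<in>Zs. q \<theta> z) = 1" for \<theta>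
    unfolding q_def by (simp add: sum.distrib q0sum sum_distrib_left[symmetric] Dsum)
  have qnn: "q \<theta> z \<ge> 0" if "\<theta> \<in> T" "z \<in> Zs" for \<theta> z
  proof -
    have "hr_out k \<epsilon> \<phi> (p\<theta> \<theta>) z \<ge> 0"
      unfolding hr_out_def using distp[OF that(1)] by (intro sum_nonneg mult_nonneg_nonneg Qnn) (auto simp: is_dist_def)
    then show ?thesis using outp[OF that(2)] by simp
  qed
  have main: "(\<Sum>\<theta>\<in>T. \<Sum>\<theta>'\<in>T. (\<Sum>z\<in>Zs. q \<theta> z * q \<theta>' z / q0 z) ^ n) / (real (card T))^2 \<ge> 10/9"
    by (rule test_lb[OF finZ finT neT q0pos q0sum qsum qnn _ rej0 rej1]) (use d01 in auto)
  define c where "c \<theta> j = (\<Sum>z\<in>Zs. (D \<theta> z / q0 z) * v j z)" for \<theta> j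
  define Y where "Y = 2 * (real n * g^2)^2 * real K^4 * real m / (1 - t)^2"
  have Dsq: "(\<Sum>z\<in>Zs. (D \<theta> z)^2) = 2 * real K * real m" if "\<theta> \<in> T" for \<theta>
  proof -
    have "(\<Sum>z\<in>Zs. (D \<theta> z)^2) = 2 * real K * (\<Sum>j<m. (\<theta> j)^2)"
      unfolding D_def by (rule parseval) (rule vorth)
    also have "(\<Sum>j<m. (\<theta> j)^2) = (\<Sum>j<m. 1)"
      by (intro sum.cong refl) (use Tpm[OF that] in fastforce)
    finally show ?thesis by simp
  qed
  have invq: "1 / q0 z \<le> real K / (1 - t)" if "z \<in> Zs" for z
  proof -
    have "(1 - t) / real K \<le> q0 z" by (rule q0lb[OF that])
    moreover have "(1 - t) / real K > 0" using t0 Kpos by simp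
    moreover have "0 < q0 z * ((1 - t) / real K)" using q0pos[OF that] \<open>(1 - t) / real K > 0\<close> by (rule mult_pos_pos)
    ultimately have "1 / q0 z \<le> 1 / ((1 - t) / real K)" by (intro divide_left_mono) auto
    then show ?thesis by simp
  qed
  have csq: "(\<Sum>j<m. (c \<theta> j)^2) \<le> 4 * real K^4 * real m / (1 - t)^2" if "\<theta> \<in> T" for \<theta>
  proof -
    have "(\<Sum>j<m. (c \<theta> j)^2) \<le> (2 * real K) * (\<Sum>z\<in>Zs. (D \<theta> z / q0 z)^2)"
      unfolding c_def by (rule bessel[OF finZ _ vorth]) (use Kpos in auto)
    also have "(\<Sum>z\<in>Zs. (D \<theta> z / q0 z)^2) \<le> (\<Sum>z\<in>Zs. (D \<theta> z)^2 * (real K / (1 - t))^2)"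
    proof (intro sum_mono)
      fix z assume z: "z \<in> Zs"
      have "(D \<theta> z / q0 z)^2 = (D \<theta> z)^2 * (1 / q0 z)^2" by (simp add: power_divide)
      also have "\<dots> \<le> (D \<theta> z)^2 * (real K / (1 - t))^2"
        using invq[OF z] q0pos[OF z] by (intro mult_left_mono power_mono) auto
      finally show "(D \<theta> z / q0 z)^2 \<le> (D \<theta> z)^2 * (real K / (1 - t))^2" .
    qed
    also have "\<dots> = 2 * real K * real m * (real K / (1 - t))^2"
      by (simp add: sum_distrib_right[symmetric] Dsq[OF that])
    finally have "(\<Sum>j<m. (c \<theta> j)^2) \<le> 2 * real K * (2 * real K * real m * (real K / (1 - t))^2)"
      using Kpos by (simp add: mult_left_mono)
    also have "\<dots> = 4 * real K^4 * real m / (1 - t)^2"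
      by (simp add: power_divide power2_eq_square field_simps power4_eq_xxxx)
    finally show ?thesis .
  qed
  have inner: "(\<Sum>\<theta>'\<in>T. (\<Sum>z\<in>Zs. q \<theta> z * q \<theta>' z / q0 z) ^ n) \<le> 2^m * exp Y" if "\<theta> \<in> T" for \<theta>
  proof -
    have "(\<Sum>z\<in>Zs. q \<theta> z * q \<theta>' z / q0 z) ^ n \<le> exp (\<Sum>j<m. \<theta>' j * (real n * g^2 * c \<theta> j))"
      if "\<theta>' \<in> T" for \<theta>'
    proof -
      define X where "X = g^2 * (\<Sum>z\<in>Zs. D \<theta> z * D \<theta>' z / q0 z)"
      have "(\<Sum>z\<in>Zs. q \<theta> z * q \<theta>' z / q0 z) = (\<Sum>z\<in>Zs. q0 z + g * D \<theta> z + g * D \<theta>' z + g^2 * (D \<theta> z * D \<theta>' z / q0 z))"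
        using q0pos by (intro sum.cong refl) (force simp: q_def field_simps power2_eq_square)
      also have "\<dots> = (\<Sum>z\<in>Zs. q0 z) + g * (\<Sum>z\<in>Zs. D \<theta> z) + g * (\<Sum>z\<in>Zs. D \<theta>' z) + X"
        unfolding X_def by (simp only: sum.distrib sum_distrib_left)
      also have "\<dots> = 1 + X" by (simp add: q0sum Dsum)
      finally have S: "(\<Sum>z\<in>Zs. q \<theta> z * q \<theta>' z / q0 z) = 1 + X" .
      have Snn: "0 \<le> (\<Sum>z\<in>Zs. q \<theta> z * q \<theta>' z / q0 z)"
        using qnn[OF \<open>\<theta> \<in> T\<close>] qnn[OF that] q0pos by (intro sum_nonneg) (simp add: less_imp_le)
      have "(\<Sum>z\<in>Zs. q \<theta> z * q \<theta>' z / q0 z) ^ n \<le> (exp X) ^ n"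
        using Snn S by (intro power_mono) (auto simp: exp_ge_add_one_self[of X, simplified add.commute])
      also have "\<dots> = exp (real n * X)" by (simp add: exp_of_nat_mult)
      also have "real n * X = (\<Sum>j<m. \<theta>' j * (real n * g^2 * c \<theta> j))"
      proof -
        have "(\<Sum>z\<in>Zs. D \<theta> z * D \<theta>' z / q0 z) = (\<Sum>z\<in>Zs. \<Sum>j<m. \<theta>' j * ((D \<theta> z / q0 z) * v j z))"
          unfolding D_def[of \<theta>'] by (intro sum.cong refl) (simp add: sum_distrib_left sum_distrib_right sum_divide_distrib algebra_simps)
        also have "\<dots> = (\<Sum>j<m. \<theta>' j * c \<theta> j)"
          unfolding c_def by (subst sum.swap) (simp add: sum_distrib_left)
        finally show ?thesis unfolding X_def by (simp add: sum_distrib_left algebra_simps)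
      qed
      finally show ?thesis .
    qed
    then have "(\<Sum>\<theta>'\<in>T. (\<Sum>z\<in>Zs. q \<theta> z * q \<theta>' z / q0 z) ^ n)
        \<le> (\<Sum>\<theta>'\<in>T. exp (\<Sum>j<m. \<theta>' j * (real n * g^2 * c \<theta> j)))"
      by (rule sum_mono)
    also have "\<dots> \<le> 2^m * exp ((\<Sum>j<m. (real n * g^2 * c \<theta> j)^2)/2)"
      unfolding T_def by (rule rademacher_mgf)
    also have "\<dots> \<le> 2^m * exp Y"
    proof -
      have "(\<Sum>j<m. (real n * g^2 * c \<theta> j)^2) = (real n * g^2)^2 * (\<Sum>j<m. (c \<theta> j)^2)"
        by (simp add: power_mult_distrib sum_distrib_left)
      also have "\<dots> \<le> (real n * g^2)^2 * (4 * real K^4 * real m / (1 - t)^2)"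
        by (intro mult_left_mono csq[OF that]) auto
      finally have A: "(\<Sum>j<m. (real n * g^2 * c \<theta> j)^2) / 2 \<le> (real n * g^2)^2 * (4 * real K^4 * real m / (1 - t)^2) / 2"
        by (rule divide_right_mono) simp
      have "(real n * g^2)^2 * (4 * real K^4 * real m / (1 - t)^2) / 2 = Y"
        unfolding Y_def by (simp add: field_simps)
      with A show ?thesis by simp
    qed
    finally show ?thesis .
  qed
  have "(\<Sum>\<theta>\<in>T. \<Sum>\<theta>'\<in>T. (\<Sum>z\<in>Zs. q \<theta> z * q \<theta>' z / q0 z) ^ n) \<le> (\<Sum>\<theta>\<in>T. 2^m * exp Y)"
    by (rule sum_mono) (rule inner)
  also have "\<dots> = 2^m * 2^m * exp Y" using cardT by simp
  finally have "(\<Sum>\<theta>\<in>T. \<Sum>\<theta>'\<in>T. (\<Sum>z\<in>Zs. q \<theta> z * q \<theta>' z / q0 z) ^ n) / (real (card T))^2 \<le> exp Y"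
    using cardT by (simp add: power2_eq_square divide_le_eq mult.commute)
  with main have expY: "exp Y \<ge> 10/9" by linarith
  have Ybig: "Y > 1/20"
  proof (rule ccontr)
    assume "\<not> Y > 1/20"
    then have Y: "Y \<le> 1/20" by simp
    have "1 - Y \<le> exp (- Y)" using exp_ge_add_one_self[of "-Y"] by simp
    then have "exp Y * (1 - Y) \<le> exp Y * exp (-Y)" by (intro mult_left_mono) auto
    then have "exp Y * (1 - Y) \<le> 1" by (simp add: exp_minus)
    moreover have "10/9 * (1 - Y) \<le> exp Y * (1 - Y)" using expY Y by (intro mult_right_mono) auto
    ultimately have "10/9 * (1 - Y) \<le> 1" by linarith
    then show False using Y by (simp add: algebra_simps)
  qed
  have gK: "g * real K = t * \<eta> / real k" using Kpos kpos by (simp add: g_def field_simps)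
  define P where "P = real n^2 * \<eta>^4 / real k^4"
  have P0: "P \<ge> 0" unfolding P_def by simp
  have "(real n * g^2)^2 * real K^4 = real n^2 * (g * real K)^4"
    by (simp add: power_mult_distrib power2_eq_square power4_eq_xxxx mult_ac)
  also have "\<dots> = P * t^4" unfolding gK P_def by (simp add: power_mult_distrib power_divide)
  finally have YK: "(real n * g^2)^2 * real K^4 = P * t^4" .
  have t1': "(1 - t)^2 \<ge> 1/4"
  proof -
    have "(1/2::real)^2 \<le> (1 - t)^2" using t1 by (intro power_mono) auto
    then show ?thesis by (simp add: power2_eq_square)
  qed
  have Ynn: "Y \<ge> 0" unfolding Y_def by simp
  have "Y * (1 - t)^2 = 2 * P * t^4 * real m"
    using t0 unfolding Y_def by (simp add: YK[symmetric] field_simps)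
  also have "\<dots> \<le> 2 * P * \<epsilon>^4 * real m"
    using P0 t0 te by (intro mult_right_mono mult_left_mono power_mono) auto
  also have "\<dots> \<le> P * \<epsilon>^4 * real k"
  proof -
    have "2 * real m \<le> real k" using m2 by linarith
    then have "P * \<epsilon>^4 * (2 * real m) \<le> P * \<epsilon>^4 * real k" using P0 by (intro mult_left_mono) auto
    then show ?thesis by (simp add: mult_ac)
  qed
  finally have Y1: "Y * (1 - t)^2 \<le> P * \<epsilon>^4 * real k" .
  have "Y * 1 \<le> Y * (4 * (1 - t)^2)" using Ynn t1' by (intro mult_left_mono) auto
  then have "Y \<le> 4 * (Y * (1 - t)^2)" by (simp add: mult_ac)
  also have "\<dots> \<le> 4 * (P * \<epsilon>^4 * real k)" using Y1 by simp
  finally have Y2: "Y \<le> 4 * (P * \<epsilon>^4 * real k)" .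
  have "4 * (P * \<epsilon>^4 * real k) = 1024 * real n^2 * \<gamma>^4 * \<epsilon>^4 / real k^3"
    using kpos unfolding P_def \<eta>_def by (simp add: power_mult_distrib field_simps power3_eq_cube power4_eq_xxxx)
  with Y2 Ybig have big: "1/20 < 1024 * real n^2 * \<gamma>^4 * \<epsilon>^4 / real k^3" by linarith
  have k3: "real k ^ 3 < 20480 * real n^2 * \<gamma>^4 * \<epsilon>^4"
  proof -
    have "real k ^ 3 > 0" using kpos by simp
    with big show ?thesis by (simp add: field_simps)
  qed
  define B where "B = 1/144 * real k powr (3/2) / (\<gamma>^2 * \<epsilon>^2)"
  have kp: "(real k powr (3/2))^2 = real k ^ 3"
  proof -
    have "(real k powr (3/2))^2 = real k powr (3/2) * real k powr (3/2)" by (simp add: power2_eq_square)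
    also have "\<dots> = real k powr 3" by (simp add: powr_add[symmetric])
    also have "\<dots> = real k ^ 3" using kpos powr_realpow[of "real k" 3] by simp
    finally show ?thesis .
  qed
  have kp': "real k powr (3/2) * real k powr (3/2) = real k ^ 3" using kp by (simp add: power2_eq_square)
  have B2: "B^2 = real k ^ 3 / (20736 * \<gamma>^4 * \<epsilon>^4)"
    unfolding B_def by (simp add: power_divide power_mult_distrib kp' power2_eq_square power4_eq_xxxx mult_ac)
  have "B \<le> real n"
  proof (rule ccontr)
    assume "\<not> B \<le> real n"
    then have "real n < B" by simp
    then have "(real n)^2 < B^2" by (intro power_strict_mono) auto
    then have "(real n)^2 * (20736 * \<gamma>^4 * \<epsilon>^4) < real k ^ 3"
      using g0 e0 unfolding B2 by (simp add: field_simps)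
    moreover have "20480 * real n^2 * \<gamma>^4 * \<epsilon>^4 \<le> (real n)^2 * (20736 * \<gamma>^4 * \<epsilon>^4)"
      using g0 e0 by simp
    ultimately show False using k3 by linarith
  qed
  then show "1/144 * real k powr (3/2) / (\<gamma>^2 * \<epsilon>^2) \<le> real n" by (simp add: B_def)
qed

end
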